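(* Let $y\in(0,\bar\delta_A)$ and let $\tau=\int_0^y\frac{du}{G(\kappa_A(u)/A)}$. (i) If $\mu<0$ and there exist constants $p<1$ and $K>0$ with $\lim_{x\to0^+}x^pF'(x)=K$, then $\tau<\infty$. (ii) If $\mu=0$ and there exist constants $p<1$ and $K>0$ with $\lim_{x\to0^+}x^pF'(x)=K$, then $\tau=\infty$ when $p\in[0,1)$ and $\tau<\infty$ when $p<0$.
   Context: $L$ is a one-dimensional, non-trivial Lévy process such that $L_1$ has finite second moment and the set $\{\delta<0:\mathbb E[e^{\delta L_1}]<\infty\}$ is non-empty, with decomposition $L_t=\mu t+\sigma W_t+\int_{\mathbb R}x\,(N(t,dx)-t\nu(dx))$ ($\mu\in\mathbb R$ the drift). Let $\bar\delta=\inf\{\delta<0:\mathbb E[e^{\delta L_1}]<\infty\}$, $A>0$, $\bar\delta_A=-\bar\delta/A$, $\kappa(x)=\ln\mathbb E[e^{xL_1}]$, $\kappa_A(x)=\kappa(-Ax)$ for $x\in[0,\bar\delta_A)$. $F:[0,\infty)\to[0,\infty)$ satisfies (i) $F\in C([0,\infty))\cap C^1((0,\infty))$; (ii) $F(0)=0$; (iii) $x\mapsto xF(x)$ is strictly convex on $[0,\infty)$; (iv) $x\mapsto x^2F'(x)$ is strictly increasing on $(0,\infty)$ and tends to $\infty$ as $x\to\infty$. $G:[0,\infty)\to[0,\infty)$ is the inverse of $x\mapsto x^2F'(x)$, with $G(0)=0$. ($\tau$ is the liquidation time of the optimal strategy.) *)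

theory Defs
  imports "HOL-Probability.Probability"
begin

definition strictly_convex_on :: "real set \<Rightarrow> (real \<Rightarrow> real) \<Rightarrow> bool" where
  "strictly_convex_on S f \<longleftrightarrow> convex S \<and>
     (\<forall>x\<in>S. \<forall>y\<in>S. x \<noteq> y \<longrightarrow> (\<forall>t::real. 0 < t \<and> t < 1 \<longrightarrow>
        f ((1 - t) * x + t * y) < (1 - t) * f x + t * f y))"

definition levy_process :: "'a measure \<Rightarrow> (real \<Rightarrow> 'a \<Rightarrow> real) \<Rightarrow> bool" where
  "levy_process M L \<longleftrightarrow> prob_space M
    \<and> (\<forall>t\<ge>0. L t \<in> borel_measurable M)
    \<and> (AE \<omega> in M. L 0 \<omega> = 0)
    \<and> (\<forall>(ts::nat \<Rightarrow> real) n. 0 \<le> ts 0 \<and> (\<forall>i<n. ts i \<le> ts (Suc i)) \<longrightarrow>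
          prob_space.indep_vars M (\<lambda>_. borel) (\<lambda>i \<omega>. L (ts (Suc i)) \<omega> - L (ts i) \<omega>) {..<n})
    \<and> (\<forall>s t. 0 \<le> s \<and> 0 \<le> t \<longrightarrow>
          distr M borel (\<lambda>\<omega>. L (s + t) \<omega> - L s \<omega>) = distr M borel (L t))
    \<and> (\<forall>t\<ge>0. \<forall>e>0. ((\<lambda>s. measure M {\<omega>\<in>space M. e < \<bar>L s \<omega> - L t \<omega>\<bar>}) \<longlongrightarrow> 0)
          (at t within {0..}))
    \<and> (AE \<omega> in M. \<forall>t\<ge>0. ((\<lambda>s. L s \<omega>) \<longlongrightarrow> L t \<omega>) (at_right t)
          \<and> (0 < t \<longrightarrow> (\<exists>l. ((\<lambda>s. L s \<omega>) \<longlongrightarrow> l) (at_left t))))"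

text \<open>Drift mu of L. With E[L_1^2] < \<infinity> the decomposition
  L_t = mu t + sigma W_t + compensated jump integral gives E[L_t] = mu t, so mu = E[L_1].\<close>
definition levy_drift :: "'a measure \<Rightarrow> (real \<Rightarrow> 'a \<Rightarrow> real) \<Rightarrow> real" where
  "levy_drift M L = integral\<^sup>L M (L 1)"

definition levy_kappa :: "'a measure \<Rightarrow> (real \<Rightarrow> 'a \<Rightarrow> real) \<Rightarrow> real \<Rightarrow> real" where
  "levy_kappa M L x = ln (integral\<^sup>L M (\<lambda>\<omega>. exp (x * L 1 \<omega>)))"

definition levy_kappaA :: "'a measure \<Rightarrow> (real \<Rightarrow> 'a \<Rightarrow> real) \<Rightarrow> real \<Rightarrow> real \<Rightarrow> real" where
  "levy_kappaA M L A x = levy_kappa M L (- A * x)"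

text \<open>delta_bar = inf{delta < 0 : E[exp(delta L_1)] < infinity}, as an extended real
  (it may be -infinity). Since exp is positive, finiteness of the expectation is integrability.\<close>
definition delta_bar :: "'a measure \<Rightarrow> (real \<Rightarrow> 'a \<Rightarrow> real) \<Rightarrow> ereal" where
  "delta_bar M L = Inf (ereal ` {\<delta>::real. \<delta> < 0 \<and> integrable M (\<lambda>\<omega>. exp (\<delta> * L 1 \<omega>))})"

definition delta_bar_A :: "'a measure \<Rightarrow> (real \<Rightarrow> 'a \<Rightarrow> real) \<Rightarrow> real \<Rightarrow> ereal" where
  "delta_bar_A M L A = - delta_bar M L / ereal A"

definition Ginv :: "(real \<Rightarrow> real) \<Rightarrow> real \<Rightarrow> real" where
  "Ginv F z = (if z = 0 then 0 else (THE x. 0 < x \<and> x\<^sup>2 * deriv F x = z))"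

definition liq_time :: "'a measure \<Rightarrow> (real \<Rightarrow> 'a \<Rightarrow> real) \<Rightarrow> (real \<Rightarrow> real) \<Rightarrow> real \<Rightarrow> real \<Rightarrow> ennreal" where
  "liq_time M L F A y =
     (\<integral>\<^sup>+ u \<in> {0<..<y}. ennreal (1 / Ginv F (levy_kappaA M L A u / A)) \<partial>lborel)"

end

theory Submission
  imports Defs
begin

lemma inv_has_integral:
  fixes a b :: real assumes "0 < a" "a \<le> b"
  shows "((\<lambda>x. 1 / x) has_integral (ln b - ln a)) {a..b}"
proof -
  have "((\<lambda>x. 1 / x) has_integral (ln b - ln a)) {a..b}"
    apply (rule fundamental_theorem_of_calculus)
    using assms apply simp
    apply (rule has_real_derivative_iff_has_vector_derivative[THEN iffD1])
    apply (rule DERIV_subset[where s = UNIV])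
    using assms by (auto intro!: derivative_eq_intros)
  then show ?thesis .
qed

lemma nn_inv_infinite:
  fixes b :: real assumes "0 < b"
  shows "(\<integral>\<^sup>+ u. ennreal (1 / u) * indicator {0<..<b} u \<partial>lborel) = \<top>"
proof (rule ccontr)
  assume "(\<integral>\<^sup>+ u. ennreal (1 / u) * indicator {0<..<b} u \<partial>lborel) \<noteq> \<top>"
  then obtain r where r: "(\<integral>\<^sup>+ u. ennreal (1 / u) * indicator {0<..<b} u \<partial>lborel) = ennreal r" "0 \<le> r"
    using less_top ennreal_cases by (metis infinity_ennreal_def)
  define c where "c = b / 2"
  define e where "e = c * exp (- (r + 1))"
  have c: "0 < c" using assms by (simp add: c_def)
  have e: "0 < e" "e \<le> c" using c r(2) by (auto simp: e_def)
  have "ln c - ln e = r + 1" using c by (simp add: e_def ln_mult)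
  have "ennreal (ln c - ln e) = (\<integral>\<^sup>+ u. ennreal (1 / u) * indicator {e..c} u \<partial>lborel)"
    by (rule nn_integral_has_integral_lebesgue'[OF _ inv_has_integral[OF e], symmetric]) (use e in auto)
  also have "\<dots> \<le> (\<integral>\<^sup>+ u. ennreal (1 / u) * indicator {0<..<b} u \<partial>lborel)"
    apply (rule nn_integral_mono)
    using e c assms unfolding c_def by (auto split: split_indicator)
  finally have "ennreal (r + 1) \<le> ennreal r" using r \<open>ln c - ln e = r + 1\<close> by simp
  then show False using r(2) by (simp add: ennreal_le_iff)
qed

lemma nn_integral_fin:
  fixes f :: "real \<Rightarrow> real" and y Ca Cb s :: real
  assumes "0 < y" "0 \<le> Ca" "0 \<le> Cb" "s < 1"
    and bnd: "\<And>u. 0 < u \<Longrightarrow> u < y \<Longrightarrow> f u \<le> Ca * u powr (- s) + Cb"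
  shows "(\<integral>\<^sup>+ u. ennreal (f u) * indicator {0<..<y} u \<partial>lborel) < \<top>"
proof -
  have hi: "((\<lambda>u. Ca * u powr (- s) + Cb) has_integral (Ca * (y powr (- s + 1) / (- s + 1)) + Cb * y)) {0..y}"
    apply (rule has_integral_add)
     apply (rule has_integral_mult_right)
     apply (rule has_integral_powr_from_0)
    using assms apply auto
    using has_integral_const_real[of Cb 0 y] by (simp add: mult.commute)
  have "(\<integral>\<^sup>+ u. ennreal (f u) * indicator {0<..<y} u \<partial>lborel)
     \<le> (\<integral>\<^sup>+ u. ennreal (Ca * u powr (- s) + Cb) * indicator {0..y} u \<partial>lborel)"
    apply (rule nn_integral_mono)
    using bnd by (auto split: split_indicator intro!: ennreal_leI)
  also have "\<dots> = ennreal (Ca * (y powr (- s + 1) / (- s + 1)) + Cb * y)"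
    by (rule nn_integral_has_integral_lebesgue'[OF _ hi]) (use assms in auto)
  finally show ?thesis using ennreal_less_top order.strict_trans1 by blast
qed

lemma nn_integral_inf:
  fixes f :: "real \<Rightarrow> real" and y b c s :: real
  assumes "0 < b" "b \<le> y" "0 < c" "1 \<le> s"
    and bnd: "\<And>u. 0 < u \<Longrightarrow> u < b \<Longrightarrow> c * u powr (- s) \<le> f u"
  shows "(\<integral>\<^sup>+ u. ennreal (f u) * indicator {0<..<y} u \<partial>lborel) = \<top>"
proof -
  define b1 where "b1 = min b 1"
  have b1: "0 < b1" "b1 \<le> b" "b1 \<le> 1" using assms by (auto simp: b1_def)
  have "\<top> = c * (\<integral>\<^sup>+ u. ennreal (1 / u) * indicator {0<..<b1} u \<partial>lborel)"
    using nn_inv_infinite[OF b1(1)] assms by (simp add: ennreal_mult_top)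
  also have "\<dots> = (\<integral>\<^sup>+ u. ennreal c * (ennreal (1 / u) * indicator {0<..<b1} u) \<partial>lborel)"
    by (rule nn_integral_cmult[symmetric]) measurable
  also have "\<dots> \<le> (\<integral>\<^sup>+ u. ennreal (f u) * indicator {0<..<y} u \<partial>lborel)"
  proof (rule nn_integral_mono)
    fix u :: real
    show "ennreal c * (ennreal (1 / u) * indicator {0<..<b1} u) \<le> ennreal (f u) * indicator {0<..<y} u"
    proof (cases "0 < u \<and> u < b1")
      case True
      then have u: "0 < u" "u < b" "u < y" "u \<le> 1" using b1 assms by auto
      have "u powr (- s) \<ge> u powr (-1)"
        using u assms by (intro powr_mono') auto
      then have "c * (1 / u) \<le> c * u powr (- s)"
        using u assms by (simp add: powr_minus divide_inverse)
      also have "\<dots> \<le> f u" using bnd u by auto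
      finally have "c * (1/u) \<le> f u" .
      then show ?thesis using True u assms
        by (simp add: ennreal_mult[symmetric] ennreal_leI)
    qed auto
  qed
  finally show ?thesis by (simp add: top_unique)
qed

lemma final_fin:
  fixes Gv zf :: "real \<Rightarrow> real" and y a K r zz :: real and e :: nat
  assumes mono: "\<And>z1 z2. 0 < z1 \<Longrightarrow> z1 \<le> z2 \<Longrightarrow> Gv z1 \<le> Gv z2"
    and pos: "\<And>z. 0 < z \<Longrightarrow> 0 < Gv z"
    and zz: "0 < zz" and low: "\<And>z. 0 < z \<Longrightarrow> z < zz \<Longrightarrow> (z / (2*K)) powr r \<le> Gv z"
    and prm: "0 < y" "0 < a" "0 < K" "0 < r" "real e * r < 1"
    and zb: "\<And>u. 0 < u \<Longrightarrow> u < y \<Longrightarrow> a * u ^ e \<le> zf u"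
  shows "(\<integral>\<^sup>+ u. ennreal (1 / Gv (zf u)) * indicator {0<..<y} u \<partial>lborel) < \<top>"
proof (rule nn_integral_fin[where Ca = "(a / (2*K)) powr (- r)" and Cb = "1 / Gv zz" and s = "real e * r"])
  show "0 \<le> 1 / Gv zz" using pos[OF zz] by simp
  fix u assume u: "0 < u" "u < y"
  have au: "0 < a * u ^ e" using u prm by simp
  have zu: "a * u ^ e \<le> zf u" using zb u by auto
  have g1: "Gv (a * u ^ e) \<le> Gv (zf u)" using mono[OF au zu] .
  have gp: "0 < Gv (a * u ^ e)" using pos[OF au] .
  show "1 / Gv (zf u) \<le> (a / (2*K)) powr (- r) * u powr (- (real e * r)) + 1 / Gv zz"
  proof (cases "a * u ^ e < zz")
    case True
    have l: "(a * u ^ e / (2*K)) powr r \<le> Gv (a * u ^ e)" using low[OF au True] .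
    have lp: "0 < (a * u ^ e / (2*K)) powr r" using au prm u by simp
    have gz: "0 < Gv (zf u)" using gp g1 by linarith
    have "1 / Gv (zf u) \<le> 1 / (a * u ^ e / (2*K)) powr r"
      using l g1 lp gz by (intro divide_left_mono mult_pos_pos) auto
    also have "\<dots> = (a / (2*K)) powr (- r) * u powr (- (real e * r))"
    proof -
      have "(a * u ^ e / (2*K)) = (a / (2*K)) * u ^ e" by simp
      then have "(a * u ^ e / (2*K)) powr r = (a / (2*K)) powr r * (u ^ e) powr r"
        using powr_mult[of "a/(2*K)" "u ^ e" r] prm u by simp
      also have "(u ^ e) powr r = u powr (real e * r)"
      proof -
        have "u ^ e = u powr (real e)" using u by (simp add: powr_realpow)
        then show ?thesis by (simp add: powr_powr)
      qed
      finally have eq: "(a * u ^ e / (2 * K)) powr r = (a / (2*K)) powr r * u powr (real e * r)" .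
      show ?thesis unfolding eq
        by (simp only: powr_minus inverse_mult_distrib divide_inverse mult_1_left)
    qed
    finally have h: "1 / Gv (zf u) \<le> (a / (2*K)) powr (- r) * u powr (- (real e * r))" .
    have "0 \<le> 1 / Gv zz" using pos[OF zz] by simp
    then show ?thesis using h by linarith
  next
    case False
    then have "Gv zz \<le> Gv (a * u ^ e)" using mono[OF zz] by auto
    then have "1 / Gv (zf u) \<le> 1 / Gv zz"
      using g1 pos[OF zz] by (intro divide_left_mono mult_pos_pos) auto
    moreover have "0 \<le> (a / (2*K)) powr (- r) * u powr (- (real e * r))" by simp
    ultimately show ?thesis by linarith
  qed
qed (use prm in auto)

lemma final_inf:
  fixes Gv zf :: "real \<Rightarrow> real" and y b C K r zz :: real
  assumes mono: "\<And>z1 z2. 0 < z1 \<Longrightarrow> z1 \<le> z2 \<Longrightarrow> Gv z1 \<le> Gv z2"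
    and pos: "\<And>z. 0 < z \<Longrightarrow> 0 < Gv z"
    and up: "\<And>z. 0 < z \<Longrightarrow> z < zz \<Longrightarrow> Gv z \<le> (2 * z / K) powr r"
    and prm: "0 < b" "b \<le> y" "0 < C" "0 < K" "0 < r" "1 \<le> 2 * r"
    and zb: "\<And>u. 0 < u \<Longrightarrow> u < b \<Longrightarrow> 0 < zf u \<and> zf u \<le> C * u\<^sup>2 \<and> C * u\<^sup>2 < zz"
  shows "(\<integral>\<^sup>+ u. ennreal (1 / Gv (zf u)) * indicator {0<..<y} u \<partial>lborel) = \<top>"
proof (rule nn_integral_inf[where b = b and c = "(2 * C / K) powr (- r)" and s = "2 * r"])
  fix u assume u: "0 < u" "u < b"
  have z: "0 < zf u" "zf u \<le> C * u\<^sup>2" "C * u\<^sup>2 < zz" using zb[OF u] by auto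
  have cu: "0 < C * u\<^sup>2" using u prm by simp
  have "Gv (zf u) \<le> Gv (C * u\<^sup>2)" using mono[OF z(1,2)] .
  also have "\<dots> \<le> (2 * (C * u\<^sup>2) / K) powr r" using up[OF cu z(3)] .
  finally have g: "Gv (zf u) \<le> (2 * (C * u\<^sup>2) / K) powr r" .
  have gp: "0 < Gv (zf u)" using pos[OF z(1)] .
  have "(2 * (C * u\<^sup>2) / K) powr r = (2 * C / K) powr r * u powr (2 * r)"
  proof -
    have e: "(2 * (C * u\<^sup>2) / K) = (2 * C / K) * u\<^sup>2" by simp
    have "(2 * (C * u\<^sup>2) / K) powr r = (2 * C / K) powr r * (u\<^sup>2) powr r"
      unfolding e using powr_mult[of "2*C/K" "u\<^sup>2" r] prm u by simp
    also have "(u\<^sup>2) powr r = u powr (2 * r)"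
    proof -
      have "u\<^sup>2 = u powr 2" using u by (simp add: powr_numeral)
      then show ?thesis by (simp add: powr_powr)
    qed
    finally show ?thesis .
  qed
  moreover have "0 < (2 * C / K) powr r * u powr (2 * r)" using prm u by simp
  ultimately have "1 / ((2 * C / K) powr r * u powr (2 * r)) \<le> 1 / Gv (zf u)"
    using g gp by (intro divide_left_mono mult_pos_pos) auto
  then show "(2 * C / K) powr (- r) * u powr (- (2 * r)) \<le> 1 / Gv (zf u)"
    using prm u by (simp add: powr_minus divide_inverse mult.commute)
qed (use prm in auto)


lemma G_props:
  fixes F :: "real \<Rightarrow> real" and p K :: real
  assumes cont: "continuous_on {0<..} (deriv F)"
    and mono: "strict_mono_on {0<..} (\<lambda>x. x\<^sup>2 * deriv F x)"
    and lim: "filterlim (\<lambda>x. x\<^sup>2 * deriv F x) at_top at_top"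
    and p: "p < 1" and K: "0 < K"
    and lim0: "((\<lambda>x. x powr p * deriv F x) \<longlongrightarrow> K) (at_right 0)"
  shows "\<forall>z>0. 0 < Ginv F z \<and> (Ginv F z)\<^sup>2 * deriv F (Ginv F z) = z"
    and "\<forall>z1 z2. 0 < z1 \<and> z1 \<le> z2 \<longrightarrow> Ginv F z1 \<le> Ginv F z2"
    and "\<exists>z0>0. \<forall>z. 0 < z \<and> z < z0 \<longrightarrow>
           (z / (2*K)) powr (1 / (2 - p)) \<le> Ginv F z \<and> Ginv F z \<le> (2 * z / K) powr (1 / (2 - p))"
proof -
  define g where "g = (\<lambda>x::real. x\<^sup>2 * deriv F x)"
  have gsplit: "g x = x powr (2 - p) * (x powr p * deriv F x)" if "0 < x" for x
  proof -
    have "x powr (2-p) * x powr p = x powr 2" by (simp add: powr_add[symmetric])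
    also have "\<dots> = x\<^sup>2" using that by (simp add: powr_numeral)
    finally show ?thesis unfolding g_def by (metis mult.assoc)
  qed
  have ev1: "eventually (\<lambda>x. K/2 < x powr p * deriv F x) (at_right 0)"
    using lim0 K by (intro order_tendstoD) auto
  have ev2: "eventually (\<lambda>x. x powr p * deriv F x < 2*K) (at_right 0)"
    using lim0 K by (intro order_tendstoD) auto
  obtain x0 where x0: "0 < x0" "\<And>x. 0 < x \<Longrightarrow> x < x0 \<Longrightarrow> K/2 < x powr p * deriv F x \<and> x powr p * deriv F x < 2*K"
    using eventually_conj[OF ev1 ev2] unfolding eventually_at_right_field by auto
  have gb: "K/2 * x powr (2-p) \<le> g x \<and> g x \<le> 2*K * x powr (2-p)" if "0 < x" "x < x0" for x
  proof -
    have P: "0 < x powr (2-p)" using that by simp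
    have q: "K/2 < x powr p * deriv F x" "x powr p * deriv F x < 2*K" using x0(2)[OF that] by auto
    have "x powr (2-p) * (K/2) \<le> x powr (2-p) * (x powr p * deriv F x)"
      using q P by (intro mult_left_mono) auto
    moreover have "x powr (2-p) * (x powr p * deriv F x) \<le> x powr (2-p) * (2*K)"
      using q P by (intro mult_left_mono) auto
    ultimately show ?thesis using gsplit[OF that(1)] by (simp add: mult.commute)
  qed
  have gmono: "x1 < x2 \<Longrightarrow> 0 < x1 \<Longrightarrow> g x1 < g x2" for x1 x2
    unfolding g_def by (rule strict_mono_onD[OF mono]) auto
  have gcont: "continuous_on {a..b} g" if "0 < a" for a b
    unfolding g_def using that
    by (intro continuous_intros continuous_on_subset[OF cont]) auto
  have g0: "(g \<longlongrightarrow> 0) (at_right 0)"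
  proof -
    have "((\<lambda>x. x powr (2 - p) * (x powr p * deriv F x)) \<longlongrightarrow> 0 * K) (at_right 0)"
      apply (intro tendsto_mult lim0)
      using p by (intro tendsto_zero_powrI) (auto intro: tendsto_ident_at simp: eventually_at_right_field intro!: exI[of _ 1])
    then have "((\<lambda>x. x powr (2 - p) * (x powr p * deriv F x)) \<longlongrightarrow> 0) (at_right 0)" by simp
    moreover have "eventually (\<lambda>x. x powr (2 - p) * (x powr p * deriv F x) = g x) (at_right 0)"
      using gsplit by (auto simp: eventually_at_right_field intro!: exI[of _ 1])
    ultimately show ?thesis using Lim_transform_eventually by blast
  qed
  have ex: "\<exists>x>0. g x = z" if "0 < z" for z
  proof -
    have "eventually (\<lambda>x. g x < z) (at_right 0)"
      using g0 that by (intro order_tendstoD) auto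
    then obtain b where b: "b > 0" "\<And>x. 0 < x \<Longrightarrow> x < b \<Longrightarrow> g x < z"
      unfolding eventually_at_right_field by auto
    define a where "a = b / 2"
    have a: "0 < a" "g a < z" using b by (auto simp: a_def)
    have "eventually (\<lambda>x. g x > z) at_top"
      using lim unfolding g_def filterlim_at_top_dense by auto
    then obtain N where N: "\<And>x. x \<ge> N \<Longrightarrow> g x > z" unfolding eventually_at_top_linorder by auto
    define c where "c = max N (a + 1)"
    have c: "g c > z" "a \<le> c" using N by (auto simp: c_def)
    obtain x where "a \<le> x" "x \<le> c" "g x = z"
      using IVT'[of g a z c, OF _ _ _ gcont[OF a(1)]] a c by auto
    then show ?thesis using a by (intro exI[of _ x]) auto
  qed
  have Gchar: "0 < Ginv F z \<and> g (Ginv F z) = z" if zpos: "0 < z" for z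
  proof -
    obtain x where x: "x > 0" "g x = z" using ex[OF zpos] by auto
    have "(THE x. 0 < x \<and> x\<^sup>2 * deriv F x = z) = x"
    proof (rule the_equality)
      show "0 < x \<and> x\<^sup>2 * deriv F x = z" using x by (simp add: g_def)
      fix w assume "0 < w \<and> w\<^sup>2 * deriv F w = z"
      then show "w = x" using gmono[of w x] gmono[of x w] x unfolding g_def
        by (cases w x rule: linorder_cases) auto
    qed
    then show ?thesis using x zpos by (simp add: Ginv_def)
  qed
  then show "\<forall>z>0. 0 < Ginv F z \<and> (Ginv F z)\<^sup>2 * deriv F (Ginv F z) = z"
    by (simp add: g_def)
  have Gmono: "Ginv F z1 \<le> Ginv F z2" if "0 < z1" "z1 \<le> z2" for z1 z2
  proof (rule ccontr)
    assume "\<not> ?thesis"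
    moreover have "0 < Ginv F z2" "0 < z2" using Gchar that by auto
    ultimately have "g (Ginv F z2) < g (Ginv F z1)" using gmono by auto
    then show False using Gchar that by auto
  qed
  then show "\<forall>z1 z2. 0 < z1 \<and> z1 \<le> z2 \<longrightarrow> Ginv F z1 \<le> Ginv F z2" by auto
  define z0 where "z0 = g (x0/2)"
  have z0: "z0 > 0"
  proof -
    have "0 < K/2 * (x0/2) powr (2-p)" using K x0 by auto
    also have "\<dots> \<le> z0" unfolding z0_def using gb[of "x0/2"] x0 by auto
    finally show ?thesis .
  qed
  have "0 < z \<and> z < z0 \<longrightarrow>
           (z / (2*K)) powr (1 / (2 - p)) \<le> Ginv F z \<and> Ginv F z \<le> (2 * z / K) powr (1 / (2 - p))" for z
  proof
    assume z: "0 < z \<and> z < z0"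
    define x where "x = Ginv F z"
    have x: "0 < x" "g x = z" using Gchar z by (auto simp: x_def)
    have "x < x0/2"
    proof (rule ccontr)
      assume "\<not> x < x0/2"
      then have "g (x0/2) \<le> g x" using gmono[of "x0/2" x] x0 by (cases "x = x0/2") auto
      then show False using x z z0_def by auto
    qed
    then have b: "K/2 * x powr (2-p) \<le> z" "z \<le> 2*K * x powr (2-p)" using gb[of x] x x0 by auto
    have e: "x = (x powr (2-p)) powr (1/(2-p))" using x p by (simp add: powr_powr)
    have l: "z / (2*K) \<le> x powr (2-p)" using b K by (simp add: field_simps)
    have u: "x powr (2-p) \<le> 2 * z / K" using b K by (simp add: field_simps)
    show "(z / (2*K)) powr (1 / (2 - p)) \<le> Ginv F z \<and> Ginv F z \<le> (2 * z / K) powr (1 / (2 - p))"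
      unfolding x_def[symmetric] using p z K
      by (subst (1 2) e) (auto intro!: powr_mono2 l u)
  qed
  then show "\<exists>z0>0. \<forall>z. 0 < z \<and> z < z0 \<longrightarrow>
           (z / (2*K)) powr (1 / (2 - p)) \<le> Ginv F z \<and> Ginv F z \<le> (2 * z / K) powr (1 / (2 - p))"
    using z0 by blast
qed


lemma exp_taylor2:
  fixes z :: real
  shows "\<exists>t. (if 0 \<le> z then 0 \<le> t \<and> t \<le> z else z \<le> t \<and> t \<le> 0) \<and> exp z = 1 + z + exp t / 2 * z\<^sup>2"
proof (cases z "0::real" rule: linorder_cases)
  case less
  from Maclaurin_minus[OF less, of 2 "\<lambda>n. exp" exp]
  obtain t where "z < t" "t < 0" "exp z = (\<Sum>m<2. exp 0 / fact m * z ^ m) + exp t / fact 2 * z ^ 2"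
    by (auto intro: DERIV_exp)
  then show ?thesis using less by (intro exI[of _ t]) (auto simp: eval_nat_numeral)
next
  case equal then show ?thesis by (intro exI[of _ 0]) auto
next
  case greater
  from Maclaurin[OF greater, of 2 "\<lambda>n. exp" exp]
  obtain t where "0 < t" "t < z" "exp z = (\<Sum>m<2. exp 0 / fact m * z ^ m) + exp t / fact 2 * z ^ 2"
    by (auto intro: DERIV_exp)
  then show ?thesis using greater by (intro exI[of _ t]) (auto simp: eval_nat_numeral)
qed

lemma exp_lower2: "0 \<le> (z::real) \<Longrightarrow> 1 + z + z\<^sup>2 / 2 \<le> exp z"
proof -
  assume z: "0 \<le> z"
  obtain t where t: "0 \<le> t" "exp z = 1 + z + exp t / 2 * z\<^sup>2" using exp_taylor2[of z] z by auto
  have "1 * z\<^sup>2 \<le> exp t * z\<^sup>2" using t by (intro mult_right_mono) auto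
  then show ?thesis using t by simp
qed

lemma exp_upper2: "exp (z::real) \<le> 1 + z + z\<^sup>2 / 2 * (1 + exp z)"
proof -
  obtain t where t: "(if 0 \<le> z then 0 \<le> t \<and> t \<le> z else z \<le> t \<and> t \<le> 0)" "exp z = 1 + z + exp t / 2 * z\<^sup>2"
    using exp_taylor2[of z] by auto
  have "exp t \<le> 1 + exp z"
  proof (cases "0 \<le> z")
    case True then have "exp t \<le> exp z" using t(1) by auto
    then show ?thesis by linarith
  next
    case False then have "exp t \<le> 1" using t(1) by auto
    then show ?thesis by (simp add: add_increasing2)
  qed
  then have "exp t * z\<^sup>2 \<le> (1 + exp z) * z\<^sup>2" by (intro mult_right_mono) auto
  then have "exp t / 2 * z\<^sup>2 \<le> z\<^sup>2 / 2 * (1 + exp z)" by (simp add: field_simps)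
  then show ?thesis using t(2) by linarith
qed

lemma sq_exp_bound: "(a::real) > 0 \<Longrightarrow> x \<le> 0 \<Longrightarrow> x\<^sup>2 * exp (a * x) \<le> 2 / a\<^sup>2"
proof -
  assume a: "a > 0" and x: "x \<le> 0"
  define w where "w = - (a * x)"
  have w: "0 \<le> w" using a x by (simp add: w_def mult_nonneg_nonpos)
  have "w\<^sup>2 / 2 \<le> exp w" using exp_lower2[OF w] w by linarith
  then have "(a*x)\<^sup>2 / 2 \<le> exp (- (a * x))" by (simp add: w_def)
  then have "(a*x)\<^sup>2 * exp (a * x) \<le> 2"
    by (simp add: exp_minus field_simps)
  then show ?thesis using a by (simp add: field_simps power_mult_distrib)
qed

lemma (in prob_space) mgf_integrable:
  fixes X :: "'a \<Rightarrow> real"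
  assumes X[measurable]: "X \<in> borel_measurable M"
    and d: "d1 \<le> d" "d \<le> 0" and I: "integrable M (\<lambda>w. exp (d1 * X w))"
  shows "integrable M (\<lambda>w. exp (d * X w))"
proof (rule Bochner_Integration.integrable_bound[where f = "\<lambda>w. exp (d1 * X w) + 1"])
  show "integrable M (\<lambda>w. exp (d1 * X w) + 1)" using I by auto
  show "AE w in M. norm (exp (d * X w)) \<le> norm (exp (d1 * X w) + 1)"
  proof (rule AE_I2)
    fix w
    have "exp (d * X w) \<le> exp (d1 * X w) + 1"
    proof (cases "X w \<le> 0")
      case True
      then have "d * X w \<le> d1 * X w" using d by (simp add: mult_right_mono_neg)
      then show ?thesis by (smt (verit) exp_gt_zero exp_le_cancel_iff)
    next
      case False
      then have "d * X w \<le> 0" using d by (simp add: mult_nonpos_nonneg)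
      then show ?thesis by (smt (verit) exp_gt_zero exp_le_one_iff)
    qed
    then show "norm (exp (d * X w)) \<le> norm (exp (d1 * X w) + 1)" by simp
  qed
qed measurable

lemma (in prob_space) mgf_lower:
  fixes X :: "'a \<Rightarrow> real"
  assumes X[measurable]: "X \<in> borel_measurable M"
    and X2: "integrable M (\<lambda>w. (X w)\<^sup>2)"
    and d: "d \<le> 0" and I: "integrable M (\<lambda>w. exp (d * X w))"
  shows "1 + d * integral\<^sup>L M X + d\<^sup>2 / 2 * integral\<^sup>L M (\<lambda>w. (min (X w) 0)\<^sup>2) \<le> integral\<^sup>L M (\<lambda>w. exp (d * X w))"
proof -
  have IX: "integrable M X" by (rule square_integrable_imp_integrable[OF X X2])
  have Im: "integrable M (\<lambda>w. (min (X w) 0)\<^sup>2)"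
    by (rule Bochner_Integration.integrable_bound[OF X2]) (auto simp: min_def)
  have pw: "1 + d * X w + d\<^sup>2 / 2 * (min (X w) 0)\<^sup>2 \<le> exp (d * X w)" for w
  proof (cases "X w \<le> 0")
    case True
    then have "0 \<le> d * X w" using d by (simp add: mult_nonpos_nonpos)
    from exp_lower2[OF this] show ?thesis using True by (simp add: power_mult_distrib)
  next
    case False then show ?thesis by (simp add: exp_ge_add_one_self)
  qed
  have "integral\<^sup>L M (\<lambda>w. 1 + d * X w + d\<^sup>2 / 2 * (min (X w) 0)\<^sup>2) \<le> integral\<^sup>L M (\<lambda>w. exp (d * X w))"
    by (rule integral_mono) (use IX Im I pw in auto)
  also have "integral\<^sup>L M (\<lambda>w. 1 + d * X w + d\<^sup>2 / 2 * (min (X w) 0)\<^sup>2)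
     = 1 + d * integral\<^sup>L M X + d\<^sup>2 / 2 * integral\<^sup>L M (\<lambda>w. (min (X w) 0)\<^sup>2)"
    using IX Im by (simp add: prob_space)
  finally show ?thesis by simp
qed

lemma (in prob_space) mgf_upper:
  fixes X :: "'a \<Rightarrow> real"
  assumes X[measurable]: "X \<in> borel_measurable M"
    and X2: "integrable M (\<lambda>w. (X w)\<^sup>2)"
    and d12: "d1 < d2" "d2 \<le> 0" and I: "integrable M (\<lambda>w. exp (d1 * X w))"
  shows "\<exists>B. \<forall>d. d2 \<le> d \<and> d \<le> 0 \<longrightarrow>
           integral\<^sup>L M (\<lambda>w. exp (d * X w)) \<le> 1 + d * integral\<^sup>L M X + d\<^sup>2 * B"
proof -
  have IX: "integrable M X" by (rule square_integrable_imp_integrable[OF X X2])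
  define a where "a = d2 - d1"
  have a: "a > 0" using d12 by (simp add: a_def)
  have I2: "integrable M (\<lambda>w. (X w)\<^sup>2 * exp (d2 * X w))"
  proof (rule Bochner_Integration.integrable_bound[where f = "\<lambda>w. 2 / a\<^sup>2 * exp (d1 * X w) + (X w)\<^sup>2"])
    show "integrable M (\<lambda>w. 2 / a\<^sup>2 * exp (d1 * X w) + (X w)\<^sup>2)" using I X2 by auto
    show "AE w in M. norm ((X w)\<^sup>2 * exp (d2 * X w)) \<le> norm (2 / a\<^sup>2 * exp (d1 * X w) + (X w)\<^sup>2)"
    proof (rule AE_I2)
      fix w
      have "(X w)\<^sup>2 * exp (d2 * X w) \<le> 2 / a\<^sup>2 * exp (d1 * X w) + (X w)\<^sup>2"
      proof (cases "X w \<le> 0")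
        case True
        have e: "exp (d2 * X w) = exp (a * X w) * exp (d1 * X w)"
          by (simp add: a_def exp_add[symmetric] algebra_simps)
        have "(X w)\<^sup>2 * exp (a * X w) * exp (d1 * X w) \<le> 2 / a\<^sup>2 * exp (d1 * X w)"
          by (intro mult_right_mono sq_exp_bound a True) auto
        then have "(X w)\<^sup>2 * (exp (a * X w) * exp (d1 * X w)) \<le> 2 / a\<^sup>2 * exp (d1 * X w)"
          by (simp only: mult.assoc)
        moreover have "0 \<le> (X w)\<^sup>2" by simp
        ultimately show ?thesis unfolding e by linarith
      next
        case False
        then have "d2 * X w \<le> 0" using d12 by (simp add: mult_nonpos_nonneg)
        then have "exp (d2 * X w) \<le> 1" by simp
        then have "(X w)\<^sup>2 * exp (d2 * X w) \<le> (X w)\<^sup>2" by (simp add: mult_left_le)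
        then show ?thesis by (smt (verit) exp_gt_zero a divide_pos_pos zero_less_power mult_pos_pos)
      qed
      then show "norm ((X w)\<^sup>2 * exp (d2 * X w)) \<le> norm (2 / a\<^sup>2 * exp (d1 * X w) + (X w)\<^sup>2)"
        by simp
    qed
  qed measurable
  define B where "B = integral\<^sup>L M (\<lambda>w. (X w)\<^sup>2) + integral\<^sup>L M (\<lambda>w. (X w)\<^sup>2 * exp (d2 * X w)) / 2"
  have "integral\<^sup>L M (\<lambda>w. exp (d * X w)) \<le> 1 + d * integral\<^sup>L M X + d\<^sup>2 * B"
    if d: "d2 \<le> d" "d \<le> 0" for d
  proof -
    have Id: "integrable M (\<lambda>w. exp (d * X w))"
      using mgf_integrable[OF X _ d(2) I] d d12 by auto
    have pw: "exp (d * X w) \<le> 1 + d * X w + d\<^sup>2 * ((X w)\<^sup>2 + (X w)\<^sup>2 * exp (d2 * X w) / 2)" for w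
    proof -
      have "exp (d * X w) \<le> 1 + exp (d2 * X w)"
      proof (cases "X w \<le> 0")
        case True
        then have "d * X w \<le> d2 * X w" using d by (simp add: mult_right_mono_neg)
        then show ?thesis by (smt (verit) exp_gt_zero exp_le_cancel_iff)
      next
        case False
        then have "d * X w \<le> 0" using d by (simp add: mult_nonpos_nonneg)
        then show ?thesis by (smt (verit) exp_gt_zero exp_le_one_iff)
      qed
      then have "(d * X w)\<^sup>2 / 2 * (1 + exp (d * X w)) \<le> (d * X w)\<^sup>2 / 2 * (2 + exp (d2 * X w))"
        by (intro mult_left_mono) auto
      also have "\<dots> = d\<^sup>2 * ((X w)\<^sup>2 + (X w)\<^sup>2 * exp (d2 * X w) / 2)"
        by (simp add: power_mult_distrib field_simps)
      finally show ?thesis using exp_upper2[of "d * X w"] by linarith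
    qed
    have "integral\<^sup>L M (\<lambda>w. exp (d * X w)) \<le> integral\<^sup>L M (\<lambda>w. 1 + d * X w + d\<^sup>2 * ((X w)\<^sup>2 + (X w)\<^sup>2 * exp (d2 * X w) / 2))"
      by (rule integral_mono) (use IX I2 X2 Id pw in auto)
    also have "\<dots> = 1 + d * integral\<^sup>L M X + d\<^sup>2 * B"
      using IX I2 X2 by (simp add: prob_space B_def)
    finally show ?thesis .
  qed
  then show ?thesis by blast
qed


lemma levy_prob: "levy_process M L \<Longrightarrow> prob_space M"
  unfolding levy_process_def by blast

lemma levy_meas: "levy_process M L \<Longrightarrow> 0 \<le> t \<Longrightarrow> L t \<in> borel_measurable M"
  unfolding levy_process_def by blast

lemma levy_zero: "levy_process M L \<Longrightarrow> AE w in M. L 0 w = 0"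
  unfolding levy_process_def by blast

lemma levy_indep: "levy_process M L \<Longrightarrow> 0 \<le> ts 0 \<Longrightarrow> (\<forall>i<n. ts i \<le> ts (Suc i)) \<Longrightarrow>
   prob_space.indep_vars M (\<lambda>_. borel) (\<lambda>i w. L (ts (Suc i)) w - L (ts i) w) {..<n}"
  unfolding levy_process_def by blast

lemma levy_stat: "levy_process M L \<Longrightarrow> 0 \<le> s \<Longrightarrow> 0 \<le> t \<Longrightarrow>
   distr M borel (\<lambda>w. L (s + t) w - L s w) = distr M borel (L t)"
  unfolding levy_process_def by blast

lemma levy_paths: "levy_process M L \<Longrightarrow>
   AE w in M. \<forall>t\<ge>0. ((\<lambda>s. L s w) \<longlongrightarrow> L t w) (at_right t)"
  unfolding levy_process_def by (auto elim: AE_mp)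

lemma levy_stat_AE:
  assumes lp: "levy_process M L" and st: "0 \<le> s" "0 \<le> t" and c: "AE w in M. L t w = c"
  shows "AE w in M. L (s + t) w - L s w = c"
proof -
  have m1[measurable]: "L t \<in> borel_measurable M" using levy_meas[OF lp st(2)] .
  have m2[measurable]: "L s \<in> borel_measurable M" using levy_meas[OF lp st(1)] .
  have m3[measurable]: "L (s+t) \<in> borel_measurable M" using levy_meas[OF lp] st by auto
  have "AE x in distr M borel (L t). x = c"
    using c by (subst AE_distr_iff) auto
  then have "AE x in distr M borel (\<lambda>w. L (s + t) w - L s w). x = c"
    using levy_stat[OF lp st] by metis
  then show ?thesis by (subst (asm) AE_distr_iff) auto
qed

lemma (in prob_space) self_indep_const:
  fixes X Y :: "'a \<Rightarrow> real"
  assumes X[measurable]: "X \<in> borel_measurable M" and Y[measurable]: "Y \<in> borel_measurable M"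
    and ind: "indep_var borel X borel Y" and s: "AE w in M. X w + Y w = 0"
  shows "\<exists>k. AE w in M. X w = k"
proof -
  define f where "f = (\<lambda>w. arctan (X w))"
  define m where "m = integral\<^sup>L M f"
  have fm[measurable]: "f \<in> borel_measurable M" unfolding f_def by measurable
  have bnd: "\<bar>arctan v\<bar> \<le> pi / 2" for v using arctan_bounded[of v] by auto
  have If: "integrable M f"
    by (rule integrable_const_bound[where B = "pi/2"]) (use bnd in \<open>auto simp: f_def intro!: AE_I2\<close>)
  have Ig: "integrable M (\<lambda>w. arctan (- Y w))"
    by (rule integrable_const_bound[where B = "pi/2"]) (use bnd in \<open>auto intro!: AE_I2\<close>)
  have ind2: "indep_var borel (arctan \<circ> X) borel ((\<lambda>v. arctan (- v)) \<circ> Y)"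
    by (rule indep_var_compose[OF ind]) auto
  have e1: "integral\<^sup>L M (\<lambda>w. f w * arctan (- Y w)) = m * integral\<^sup>L M (\<lambda>w. arctan (- Y w))"
    using indep_var_lebesgue_integral[OF ind2[unfolded comp_def]] If Ig unfolding f_def m_def by simp
  have ae: "AE w in M. arctan (- Y w) = f w"
    using s by eventually_elim (simp add: f_def eq_neg_iff_add_eq_0[symmetric])
  have e2: "integral\<^sup>L M (\<lambda>w. arctan (- Y w)) = m"
    unfolding m_def by (rule integral_cong_AE[OF _ _ ae]) auto
  have e3: "integral\<^sup>L M (\<lambda>w. f w * arctan (- Y w)) = integral\<^sup>L M (\<lambda>w. (f w)\<^sup>2)"
    by (rule integral_cong_AE) (use ae in \<open>auto simp: power2_eq_square elim: AE_mp\<close>)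
  have If2: "integrable M (\<lambda>w. (f w)\<^sup>2)"
  proof (rule integrable_const_bound[where B = "(pi/2)\<^sup>2"])
    have bnd2: "(arctan v)\<^sup>2 \<le> (pi/2)\<^sup>2" for v
      using bnd[of v] pi_gt_zero by (subst abs_le_square_iff[symmetric]) auto
    show "AE x in M. norm ((f x)\<^sup>2) \<le> (pi / 2)\<^sup>2" by (rule AE_I2) (simp add: f_def bnd2)
  qed simp
  have "integral\<^sup>L M (\<lambda>w. (f w - m)\<^sup>2) = integral\<^sup>L M (\<lambda>w. (f w)\<^sup>2 - 2 * m * f w + m\<^sup>2)"
    by (rule arg_cong[where f = "integral\<^sup>L M"]) (auto simp: power2_diff algebra_simps)
  also have "\<dots> = integral\<^sup>L M (\<lambda>w. (f w)\<^sup>2) - 2 * m * m + m\<^sup>2"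
    using If If2 by (simp add: prob_space m_def)
  also have "\<dots> = 0" using e1 e2 e3 by (simp add: power2_eq_square)
  finally have "integral\<^sup>L M (\<lambda>w. (f w - m)\<^sup>2) = 0" .
  moreover have "integrable M (\<lambda>w. (f w - m)\<^sup>2)"
    using If If2 by (simp add: power2_diff)
  ultimately have "AE w in M. (f w - m)\<^sup>2 = 0"
    by (subst (asm) integral_nonneg_eq_0_iff_AE) auto
  then have "AE w in M. X w = tan m"
    by eventually_elim (auto simp: f_def tan_arctan)
  then show ?thesis by blast
qed

lemma levy_half:
  assumes lp: "levy_process M L" and t: "0 \<le> t" and z: "AE w in M. L t w = 0"
  shows "AE w in M. L (t/2) w = 0"
proof -
  interpret prob_space M using levy_prob[OF lp] .
  define ts where "ts = (\<lambda>i::nat. real i * t / 2)"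
  have mt[measurable]: "L t \<in> borel_measurable M" "L (t/2) \<in> borel_measurable M" "L 0 \<in> borel_measurable M"
    using levy_meas[OF lp] t by auto
  have ind: "indep_vars (\<lambda>_. borel) (\<lambda>i w. L (ts (Suc i)) w - L (ts i) w) {..<2}"
  proof -
    have "\<forall>i<2. ts i \<le> ts (Suc i)" unfolding ts_def using t by (auto intro!: divide_right_mono mult_right_mono)
    then show ?thesis using levy_indep[OF lp, of ts 2] by (simp add: ts_def)
  qed
  have "{..<2::nat} = insert 0 {1}" by auto
  with ind have "indep_var borel (\<lambda>w. L (ts (Suc 0)) w - L (ts 0) w) borel
      (\<lambda>w. \<Sum>i\<in>{1}. L (ts (Suc i)) w - L (ts i) w)"
    using indep_vars_sum[of "{1}" 0 "\<lambda>i w. L (ts (Suc i)) w - L (ts i) w"] by simp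
  then have ind2: "indep_var borel (\<lambda>w. L (t/2) w - L 0 w) borel (\<lambda>w. L t w - L (t/2) w)"
    by (simp add: ts_def)
  have s: "AE w in M. (L (t/2) w - L 0 w) + (L t w - L (t/2) w) = 0"
    using z levy_zero[OF lp] by eventually_elim auto
  obtain k where k: "AE w in M. L (t/2) w - L 0 w = k"
    using self_indep_const[OF _ _ ind2 s] by auto
  have k2: "AE w in M. L (t/2) w = k"
    using k levy_zero[OF lp] by eventually_elim auto
  have k3: "AE w in M. L t w - L (t/2) w = k"
    using levy_stat_AE[OF lp _ _ k2, of "t/2"] t by simp
  have "AE w in M. k + k = 0"
    using k k3 s by eventually_elim auto
  then have "k = 0" by simp
  then show ?thesis using k2 by simp
qed

lemma levy_dyadic:
  assumes lp: "levy_process M L" and z: "AE w in M. L 1 w = 0"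
  shows "AE w in M. L (1 / 2 ^ k) w = 0"
proof (induction k)
  case 0 then show ?case using z by simp
next
  case (Suc k)
  from levy_half[OF lp _ Suc] show ?case by (simp add: field_simps)
qed

lemma levy_mult:
  assumes lp: "levy_process M L" and h: "0 \<le> h" and z: "AE w in M. L h w = 0"
  shows "AE w in M. L (real m * h) w = 0"
proof (induction m)
  case 0 then show ?case using levy_zero[OF lp] by simp
next
  case (Suc m)
  have "AE w in M. L (real m * h + h) w - L (real m * h) w = 0"
    using levy_stat_AE[OF lp _ h z] h by auto
  with Suc show ?case by eventually_elim (auto simp: algebra_simps)
qed

lemma levy_trivial:
  assumes lp: "levy_process M L" and z: "AE w in M. L 1 w = 0" and t: "0 \<le> t"
  shows "AE w in M. L t w = 0"
proof -
  have "AE w in M. \<forall>mk::nat\<times>nat. L (real (fst mk) * (1 / 2 ^ snd mk)) w = 0"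
    unfolding AE_all_countable
    using levy_mult[OF lp _ levy_dyadic[OF lp z]] by auto
  then show ?thesis using levy_paths[OF lp]
  proof eventually_elim
    case (elim w)
    define s where "s = (\<lambda>k::nat. real (nat \<lfloor>t * 2 ^ k\<rfloor> + 1) * (1 / 2 ^ k))"
    have sb: "t < s k \<and> s k \<le> t + 1 / 2 ^ k" for k
    proof -
      have "0 \<le> \<lfloor>t * 2 ^ k\<rfloor>" using t by simp
      then have fl: "real (nat \<lfloor>t * 2 ^ k\<rfloor>) = of_int \<lfloor>t * 2 ^ k\<rfloor>" by simp
      have f1: "real (nat \<lfloor>t * 2 ^ k\<rfloor>) \<le> t * 2 ^ k" unfolding fl by linarith
      have f2: "t * 2 ^ k < real (nat \<lfloor>t * 2 ^ k\<rfloor>) + 1" unfolding fl by linarith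
      show ?thesis using f1 f2 unfolding s_def by (auto simp: field_simps)
    qed
    have "(\<lambda>k. t + 1 / 2 ^ k) \<longlonglongrightarrow> t + 0"
      by (intro tendsto_add tendsto_const LIMSEQ_divide_realpow_zero) auto
    then have "s \<longlonglongrightarrow> t"
      using sb by (intro real_tendsto_sandwich[of "\<lambda>_. t" s sequentially "\<lambda>k. t + 1 / 2 ^ k" t]) (auto intro: less_imp_le intro!: always_eventually)
    then have "filterlim s (at_right t) sequentially"
      using sb by (auto simp: filterlim_at intro!: always_eventually)
    moreover have "((\<lambda>s. L s w) \<longlongrightarrow> L t w) (at_right t)" using elim(2) t by auto
    ultimately have "(\<lambda>k. L (s k) w) \<longlonglongrightarrow> L t w" by (rule filterlim_compose[rotated])
    moreover have "L (s k) w = 0" for k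
      using elim(1)[rule_format, of "(nat \<lfloor>t * 2 ^ k\<rfloor> + 1, k)"] by (simp add: s_def)
    ultimately show "L t w = 0" using LIMSEQ_unique[of _ "L t w" 0] by simp
  qed
qed

lemma ln_lower_aux:
  fixes w W m :: real
  assumes "0 \<le> w" "w \<le> W" "1 + w \<le> m"
  shows "w / (1 + W) \<le> ln m"
proof -
  have m: "0 < m" using assms by linarith
  have "ln (1 / m) \<le> 1 / m - 1" using m by (intro ln_le_minus_one) auto
  then have l: "1 - 1 / m \<le> ln m" using m by (simp add: ln_div)
  have "1 / m \<le> 1 / (1 + w)" using assms by (intro divide_left_mono) auto
  then have "w / (1 + w) \<le> 1 - 1 / m" using assms by (simp add: field_simps)
  moreover have "w / (1 + W) \<le> w / (1 + w)" using assms by (intro divide_left_mono) auto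
  ultimately show ?thesis using l by linarith
qed

theorem mainTheorem10:
  fixes M :: "'a measure" and L :: "real \<Rightarrow> 'a \<Rightarrow> real"
    and F :: "real \<Rightarrow> real" and A y :: real
  assumes levy: "levy_process M L"
    and nontrivial: "\<not> (\<forall>t\<ge>0. AE \<omega> in M. L t \<omega> = 0)"
    and second_moment: "integrable M (\<lambda>\<omega>. (L 1 \<omega>)\<^sup>2)"
    and exp_moment: "\<exists>\<delta><0. integrable M (\<lambda>\<omega>. exp (\<delta> * L 1 \<omega>))"
    and A_pos: "0 < A"
    and F_nonneg: "\<forall>x\<ge>0. 0 \<le> F x"
    and F_cont: "continuous_on {0..} F"
    and F_C1: "(\<forall>x>0. F differentiable (at x)) \<and> continuous_on {0<..} (deriv F)"
    and F_zero: "F 0 = 0"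
    and F_conv: "strictly_convex_on {0..} (\<lambda>x. x * F x)"
    and F_mono: "strict_mono_on {0<..} (\<lambda>x. x\<^sup>2 * deriv F x)"
    and F_lim: "filterlim (\<lambda>x. x\<^sup>2 * deriv F x) at_top at_top"
    and y_pos: "0 < y"
    and y_lt: "ereal y < delta_bar_A M L A"
  shows "(levy_drift M L < 0 \<longrightarrow>
            (\<forall>p K. p < 1 \<and> 0 < K \<and> ((\<lambda>x. x powr p * deriv F x) \<longlongrightarrow> K) (at_right 0) \<longrightarrow>
               liq_time M L F A y < \<top>))
       \<and> (levy_drift M L = 0 \<longrightarrow>
            (\<forall>p K. p < 1 \<and> 0 < K \<and> ((\<lambda>x. x powr p * deriv F x) \<longlongrightarrow> K) (at_right 0) \<longrightarrow>
               (0 \<le> p \<longrightarrow> liq_time M L F A y = \<top>) \<and> (p < 0 \<longrightarrow> liq_time M L F A y < \<top>)))"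
proof -
  interpret prob_space M using levy_prob[OF levy] .
  define X where "X = L 1"
  have Xm[measurable]: "X \<in> borel_measurable M" unfolding X_def using levy_meas[OF levy] by simp
  have X2: "integrable M (\<lambda>w. (X w)\<^sup>2)" using second_moment by (simp add: X_def)
  have IX: "integrable M X" by (rule square_integrable_imp_integrable[OF Xm X2])
  define mu where "mu = integral\<^sup>L M X"
  have drift: "levy_drift M L = mu" by (simp add: levy_drift_def mu_def X_def)
  define zf where "zf = (\<lambda>u. levy_kappaA M L A u / A)"
  have kA: "zf u = ln (integral\<^sup>L M (\<lambda>w. exp ((- A * u) * X w))) / A" for u
    by (simp add: zf_def levy_kappaA_def levy_kappa_def X_def)
  have liq: "liq_time M L F A y = (\<integral>\<^sup>+ u. ennreal (1 / Ginv F (zf u)) * indicator {0<..<y} u \<partial>lborel)"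
    by (simp add: liq_time_def zf_def)
  have "\<exists>d1. d1 < - A * y \<and> d1 < 0 \<and> integrable M (\<lambda>w. exp (d1 * X w))"
  proof -
    have "delta_bar M L < ereal (- A * y)"
    proof (cases "delta_bar M L")
      case (real r)
      then have "ereal y < ereal (- r / A)" using y_lt A_pos by (simp add: delta_bar_A_def)
      then have "y < - r / A" by simp
      then have "r < - A * y" using A_pos by (simp add: field_simps)
      then show ?thesis using real by simp
    next
      case PInf
      then show ?thesis using y_lt A_pos by (simp add: delta_bar_A_def)
    next
      case MInf
      then show ?thesis by simp
    qed
    then obtain x where "x < 0" "integrable M (\<lambda>\<omega>. exp (x * L 1 \<omega>))" "x < - (A * y)"
      unfolding delta_bar_def by (auto simp: Inf_less_iff)
    then show ?thesis by (auto simp: X_def)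
  qed
  then obtain d1 where d1: "d1 < - A * y" "d1 < 0" "integrable M (\<lambda>w. exp (d1 * X w))" by blast
  have Iu: "integrable M (\<lambda>w. exp ((- A * u) * X w))" if "0 \<le> u" "u \<le> y" for u
  proof (rule mgf_integrable[OF Xm _ _ d1(3)])
    have "A * u \<le> A * y" using that A_pos by (intro mult_left_mono) auto
    then show "d1 \<le> - A * u" using d1 by linarith
    show "- A * u \<le> 0" using that A_pos by simp
  qed
  define V where "V = integral\<^sup>L M (\<lambda>w. (min (X w) 0)\<^sup>2)"
  have V0: "0 \<le> V" unfolding V_def by (rule integral_nonneg_AE) auto
  have low: "1 + (- A * u) * mu + (- A * u)\<^sup>2 / 2 * V \<le> integral\<^sup>L M (\<lambda>w. exp ((- A * u) * X w))"
    if "0 < u" "u < y" for u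
    unfolding mu_def V_def using that A_pos
    by (intro mgf_lower[OF Xm X2 _ Iu]) auto
  have r1: "0 < 1 / (2 - p)" "1 / (2 - p) < 1" if "p < 1" for p :: real
    using that by (auto simp: field_simps)
  have part1: "liq_time M L F A y < \<top>"
    if mu: "mu < 0" and pK: "p < 1" "0 < K" "((\<lambda>x. x powr p * deriv F x) \<longlongrightarrow> K) (at_right 0)" for p K
  proof -
    note G = G_props[OF conjunct2[OF F_C1] F_mono F_lim pK]
    obtain z0 where z0: "z0 > 0" "\<And>z. 0 < z \<Longrightarrow> z < z0 \<Longrightarrow>
        (z / (2*K)) powr (1 / (2 - p)) \<le> Ginv F z \<and> Ginv F z \<le> (2 * z / K) powr (1 / (2 - p))"
      using G(3) by blast
    define W where "W = A * y * (- mu)"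
    have W: "0 \<le> W" unfolding W_def using A_pos y_pos mu
      by (intro mult_nonneg_nonneg) auto
    define a where "a = - mu / (1 + W)"
    have a: "0 < a" unfolding a_def using W mu by (intro divide_pos_pos) auto
    have zb: "a * u ^ 1 \<le> zf u" if u: "0 < u" "u < y" for u
    proof -
      have f1: "A * u * (- mu) \<le> W" unfolding W_def using u A_pos mu
        by (intro mult_right_mono mult_left_mono) auto
      have f0: "0 \<le> A * u * (- mu)" using u A_pos mu by (intro mult_nonneg_nonneg) auto
      have f2: "1 + A * u * (- mu) \<le> integral\<^sup>L M (\<lambda>w. exp ((- A * u) * X w))"
      proof -
        have "0 \<le> (- A * u)\<^sup>2 / 2 * V" using V0 by simp
        then show ?thesis using low[OF u] by simp
      qed
      have "A * u * (- mu) / (1 + W) \<le> ln (integral\<^sup>L M (\<lambda>w. exp ((- A * u) * X w)))"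
        by (rule ln_lower_aux[OF f0 f1 f2])
      also have "\<dots> = A * zf u" using A_pos by (simp add: kA)
      finally have h: "A * u * (- mu) / (1 + W) \<le> A * zf u" .
      have "A * u * (- mu) / (1 + W) = A * (a * u ^ 1)" using W by (simp add: a_def field_simps)
      then have "A * (a * u ^ 1) \<le> A * zf u" using h by simp
      then show ?thesis using A_pos by (simp add: mult_le_cancel_left_pos)
    qed
    show ?thesis unfolding liq
      by (rule final_fin[where Gv = "Ginv F" and zf = zf and e = 1 and a = a and K = K and r = "1 / (2 - p)" and zz = z0])
         (use G(1) G(2) z0 pK y_pos zb r1[OF pK(1)] a in auto)
  qed
  have part2: "(0 \<le> p \<longrightarrow> liq_time M L F A y = \<top>) \<and> (p < 0 \<longrightarrow> liq_time M L F A y < \<top>)"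
    if mu: "mu = 0" and pK: "p < 1" "0 < K" "((\<lambda>x. x powr p * deriv F x) \<longlongrightarrow> K) (at_right 0)" for p K
  proof -
    note G = G_props[OF conjunct2[OF F_C1] F_mono F_lim pK]
    obtain z0 where z0: "z0 > 0" "\<And>z. 0 < z \<Longrightarrow> z < z0 \<Longrightarrow>
        (z / (2*K)) powr (1 / (2 - p)) \<le> Ginv F z \<and> Ginv F z \<le> (2 * z / K) powr (1 / (2 - p))"
      using G(3) by blast
    have Vpos: "0 < V"
    proof (rule ccontr)
      assume "\<not> 0 < V"
      then have "V = 0" using V0 by simp
      moreover have "integrable M (\<lambda>w. (min (X w) 0)\<^sup>2)"
        by (rule Bochner_Integration.integrable_bound[OF X2]) (auto simp: min_def)
      ultimately have "AE w in M. (min (X w) 0)\<^sup>2 = 0"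
        unfolding V_def by (subst (asm) integral_nonneg_eq_0_iff_AE) auto
      then have Xnn: "AE w in M. 0 \<le> X w" by eventually_elim (auto simp: min_def split: if_splits)
      have "integral\<^sup>L M X = 0" using mu mu_def by simp
      then have "AE w in M. X w = 0"
        using integral_nonneg_eq_0_iff_AE[OF IX Xnn] by simp
      then have "AE w in M. L 1 w = 0" by (simp add: X_def)
      then show False using levy_trivial[OF levy] nontrivial by blast
    qed
    define W where "W = A\<^sup>2 * y\<^sup>2 * V / 2"
    have W: "0 \<le> W" unfolding W_def using V0 by simp
    define a where "a = A * V / (2 * (1 + W))"
    have a: "0 < a" unfolding a_def using A_pos Vpos W by simp
    have zb: "a * u ^ 2 \<le> zf u" if u: "0 < u" "u < y" for u
    proof -
      have f1: "A\<^sup>2 * u\<^sup>2 * V / 2 \<le> W" unfolding W_def using u V0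
        by (intro divide_right_mono mult_right_mono mult_left_mono power_mono) auto
      have f0: "0 \<le> A\<^sup>2 * u\<^sup>2 * V / 2" using V0 by simp
      have f2: "1 + A\<^sup>2 * u\<^sup>2 * V / 2 \<le> integral\<^sup>L M (\<lambda>w. exp ((- A * u) * X w))"
        using low[OF u] mu by (simp add: power_mult_distrib)
      have "A\<^sup>2 * u\<^sup>2 * V / 2 / (1 + W) \<le> ln (integral\<^sup>L M (\<lambda>w. exp ((- A * u) * X w)))"
        by (rule ln_lower_aux[OF f0 f1 f2])
      also have "\<dots> = A * zf u" using A_pos by (simp add: kA)
      finally have h: "A\<^sup>2 * u\<^sup>2 * V / 2 / (1 + W) \<le> A * zf u" .
      have "A\<^sup>2 * u\<^sup>2 * V / 2 / (1 + W) = A * (a * u ^ 2)" using W by (simp add: a_def field_simps power2_eq_square)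
      then have "A * (a * u ^ 2) \<le> A * zf u" using h by simp
      then show ?thesis using A_pos by (simp add: mult_le_cancel_left_pos)
    qed
    have zpos: "0 < zf u" if "0 < u" "u < y" for u
      using zb[OF that] a that by (smt (verit) zero_less_power mult_pos_pos)
    have fin: "liq_time M L F A y < \<top>" if "p < 0"
    proof -
      have e2: "real 2 * (1 / (2 - p)) < 1" using that by (simp add: field_simps)
      show ?thesis unfolding liq
        by (rule final_fin[where Gv = "Ginv F" and zf = zf and e = 2 and a = a and K = K and r = "1 / (2 - p)" and zz = z0])
           (use G(1) G(2) z0 pK y_pos zb r1[OF pK(1)] a e2 in auto)
    qed
    have inf: "liq_time M L F A y = \<top>" if p0: "0 \<le> p"
    proof -
      obtain B where B: "\<And>d. d1 / 2 \<le> d \<Longrightarrow> d \<le> 0 \<Longrightarrow>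
          integral\<^sup>L M (\<lambda>w. exp (d * X w)) \<le> 1 + d * integral\<^sup>L M X + d\<^sup>2 * B"
        using mgf_upper[OF Xm X2 _ _ d1(3), of "d1 / 2"] d1 by auto
      define C where "C = max (A * B) 1"
      have C: "0 < C" by (simp add: C_def)
      define b where "b = min (min y (- d1 / (2 * A))) (min 1 (z0 / (2 * C)))"
      have "0 < - d1 / (2 * A)" using d1 A_pos by (intro divide_pos_pos) auto
      then have b: "0 < b" "b \<le> y" unfolding b_def using y_pos z0 C by auto
      have zb2: "0 < zf u \<and> zf u \<le> C * u\<^sup>2 \<and> C * u\<^sup>2 < z0" if u: "0 < u" "u < b" for u
      proof -
        have uy: "u < y" "u < - d1 / (2 * A)" "u < 1" "u < z0 / (2 * C)" using u unfolding b_def by auto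
        have "A * u < - d1 / 2" using uy(2) A_pos by (simp add: field_simps)
        then have dd: "d1 / 2 \<le> - A * u" by simp
        have m: "integral\<^sup>L M (\<lambda>w. exp ((- A * u) * X w)) \<le> 1 + (- A * u)\<^sup>2 * B"
          using B[OF dd] u A_pos mu mu_def by simp
        have mp: "0 < integral\<^sup>L M (\<lambda>w. exp ((- A * u) * X w))"
        proof -
          have mp0: "0 \<le> (- A * u)\<^sup>2 / 2 * V" using V0 by simp
          have "1 + (- A * u) * mu + (- A * u)\<^sup>2 / 2 * V \<le> integral\<^sup>L M (\<lambda>w. exp ((- A * u) * X w))"
            using low[OF u(1) uy(1)] .
          then show ?thesis using mp0 mu by simp
        qed
        have "ln (integral\<^sup>L M (\<lambda>w. exp ((- A * u) * X w))) \<le> (- A * u)\<^sup>2 * B"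
          using ln_le_minus_one[OF mp] m by linarith
        moreover have "A * zf u = ln (integral\<^sup>L M (\<lambda>w. exp ((- A * u) * X w)))"
          using A_pos by (simp add: kA)
        moreover have "(- A * u)\<^sup>2 * B = A * (A * B * u\<^sup>2)" by (simp add: power2_eq_square algebra_simps)
        ultimately have "A * zf u \<le> A * (A * B * u\<^sup>2)" by linarith
        then have "zf u \<le> A * B * u\<^sup>2" using A_pos by simp
        also have "\<dots> \<le> C * u\<^sup>2" by (intro mult_right_mono) (auto simp: C_def)
        finally have z1: "zf u \<le> C * u\<^sup>2" .
        have "u\<^sup>2 \<le> u" using u uy(3) by (simp add: power2_eq_square mult_le_cancel_right1 less_imp_le)
        then have "C * u\<^sup>2 \<le> C * u" using C by simp
        also have "\<dots> < C * (z0 / (2 * C))" using C uy(4) by (intro mult_strict_left_mono) auto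
        also have "\<dots> < z0" using C z0 by simp
        finally show ?thesis using z1 zpos[OF u(1) uy(1)] by simp
      qed
      have "1 \<le> 2 * (1 / (2 - p))" using p0 pK by (simp add: field_simps)
      then show ?thesis unfolding liq
        by (intro final_inf[where Gv = "Ginv F" and zf = zf and b = b and C = C and K = K and r = "1 / (2 - p)" and zz = z0])
           (use G(1) G(2) z0 pK b C zb2 r1[OF pK(1)] in auto)
    qed
    show ?thesis using fin inf by auto
  qed
  show ?thesis unfolding drift using part1 part2 by blast
qed

end
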